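(* Let $b\ge 2$ be an integer, let $G$ be a $b$-dc-semigroup, and suppose $I_b(j,l)\subseteq G$ for some $j\in\mathbf{N}$ and $l\in\mathbf{N}^*$. Let $d=\lceil j/l\rceil$. \begin{enumerate} \item If $d\ge 1$, then $I_b(dj,+\infty)\subseteq G$. \item If $d=0$, $l\ge 2$ and $b=2$, then $G=\mathbf{N}^*$. \item If $d=0$ and $b>2$, then $G=\mathbf{N}^*$. \end{enumerate}
   Context: $\mathbf{N}=\{0,1,2,\dots\}$ and $\mathbf{N}^*=\mathbf{N}\setminus\{0\}$. For an integer $b\ge2$, a $b$-dc-semigroup is a subsemigroup $G$ of the multiplicative semigroup $(\mathbf{N}^*,\cdot)$ which is closed with respect to the number of base-$b$ digits: if $x\in G$ and $b^{n-1}\le x<b^n$ then $\{y\in\mathbf{N}: b^{n-1}\le y<b^n\}\subseteq G$. For $i\in\mathbf{N}$ and $j\in\mathbf{N}^*$, $I_b(i,j)=\{x\in\mathbf{N}: b^i\le x<b^{i+j}\}$ and $I_b(i,+\infty)=\{x\in\mathbf{N}: x\ge b^i\}$. *)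

theory Defs
  imports Complex_Main
begin

definition Ib :: "nat \<Rightarrow> nat \<Rightarrow> nat \<Rightarrow> nat set" where
  "Ib b i j = {x. b ^ i \<le> x \<and> x < b ^ (i + j)}"

definition Ib_inf :: "nat \<Rightarrow> nat \<Rightarrow> nat set" where
  "Ib_inf b i = {x. b ^ i \<le> x}"

definition dc_semigroup :: "nat \<Rightarrow> nat set \<Rightarrow> bool" where
  "dc_semigroup b G \<longleftrightarrow>
     G \<subseteq> {x. x > 0} \<and>
     (\<forall>x\<in>G. \<forall>y\<in>G. x * y \<in> G) \<and>
     (\<forall>x\<in>G. \<forall>n\<ge>1. b ^ (n - 1) \<le> x \<and> x < b ^ n \<longrightarrow> {y. b ^ (n - 1) \<le> y \<and> y < b ^ n} \<subseteq> G)"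

end

theory Submission
  imports Defs
begin

definition inE :: "nat \<Rightarrow> nat set \<Rightarrow> nat \<Rightarrow> bool" where
  "inE b G e \<longleftrightarrow> (\<forall>x. b ^ e \<le> x \<and> x < b ^ Suc e \<longrightarrow> x \<in> G)"

lemma inE_I:
  assumes "dc_semigroup b G" "y \<in> G" "b ^ e \<le> y" "y < b ^ Suc e"
  shows "inE b G e"
proof -
  have "\<forall>n\<ge>1. b ^ (n - 1) \<le> y \<and> y < b ^ n \<longrightarrow> {z. b ^ (n - 1) \<le> z \<and> z < b ^ n} \<subseteq> G"
    using assms(1,2) unfolding dc_semigroup_def by blast
  from this[rule_format, of "Suc e"] assms(3,4) show ?thesis
    unfolding inE_def by auto
qed

lemma inE_add:
  assumes "dc_semigroup b G" "b \<ge> 2" "inE b G e1" "inE b G e2"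
  shows "inE b G (e1 + e2)"
proof -
  have pos: "b ^ e1 < b ^ Suc e1" "b ^ e2 < b ^ Suc e2" using assms(2) by auto
  have "b ^ e1 \<in> G" "b ^ e2 \<in> G" using assms(3,4) pos unfolding inE_def by auto
  hence "b ^ e1 * b ^ e2 \<in> G" using assms(1) unfolding dc_semigroup_def by blast
  hence "b ^ (e1 + e2) \<in> G" by (simp add: power_add)
  moreover have "b ^ (e1 + e2) < b ^ Suc (e1 + e2)" using assms(2) by auto
  ultimately show ?thesis using inE_I[OF assms(1)] by blast
qed

lemma prod_bound:
  fixes b u v :: nat
  assumes "b \<ge> 2" "u \<ge> 2" "v \<ge> 2"
  shows "b * u * v \<le> (b * u - 1) * (b * v - 1)"
proof -
  have "int (b * u * v) \<le> (int b * int u - 1) * (int b * int v - 1)"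
  proof -
    define B U V where "B = int b" "U = int u" "V = int v"
    have hB: "B \<ge> 2" "U \<ge> 2" "V \<ge> 2" using assms unfolding B_U_V_def by auto
    have "(U - 1) * (V - 1) \<ge> 1 * 1" using hB by (intro mult_mono) auto
    hence h1: "U * V \<ge> U + V" by (simp add: algebra_simps)
    have h2: "B * (U * V) \<ge> B * (U + V)" using h1 hB by (intro mult_left_mono) auto
    have h3: "B * (B * U * V) \<ge> 2 * (B * U * V)" using hB by (intro mult_right_mono) auto
    have "B * U * V \<le> (B * U - 1) * (B * V - 1)"
      using h2 h3 by (simp add: algebra_simps)
    thus ?thesis unfolding B_U_V_def by simp
  qed
  moreover have "b * u \<ge> 1" "b * v \<ge> 1" using assms by auto
  moreover have "int ((b * u - 1) * (b * v - 1)) = (int b * int u - 1) * (int b * int v - 1)"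
    using calculation(2,3) by (simp add: of_nat_diff)
  ultimately show ?thesis by (metis of_nat_le_iff of_nat_mult)
qed

lemma inE_add1:
  assumes "dc_semigroup b G" "b \<ge> 2" "inE b G e1" "inE b G e2" "e1 \<ge> 1" "e2 \<ge> 1"
  shows "inE b G (e1 + e2 + 1)"
proof -
  have p1: "b ^ Suc e1 \<ge> 1" "b ^ Suc e2 \<ge> 1" using assms(2) by auto
  have "b ^ e1 \<le> b ^ Suc e1 - 1"
  proof -
    have "b ^ e1 < b ^ Suc e1" using assms(2) by auto
    thus ?thesis by linarith
  qed
  hence y1: "b ^ Suc e1 - 1 \<in> G" using assms(3) p1 unfolding inE_def by auto
  have "b ^ e2 \<le> b ^ Suc e2 - 1"
  proof -
    have "b ^ e2 < b ^ Suc e2" using assms(2) by auto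
    thus ?thesis by linarith
  qed
  hence y2: "b ^ Suc e2 - 1 \<in> G" using assms(4) p1 unfolding inE_def by auto
  have yy: "(b ^ Suc e1 - 1) * (b ^ Suc e2 - 1) \<in> G"
    using y1 y2 assms(1) unfolding dc_semigroup_def by blast
  have "b ^ 1 \<le> b ^ e1" "b ^ 1 \<le> b ^ e2" using assms(2,5,6) by (intro power_increasing; simp)+
  hence u: "b ^ e1 \<ge> 2" "b ^ e2 \<ge> 2" using assms(2) by auto
  have lo: "b ^ (e1 + e2 + 1) \<le> (b ^ Suc e1 - 1) * (b ^ Suc e2 - 1)"
    using prod_bound[OF assms(2) u] by (simp add: power_add mult.assoc mult.left_commute)
  have "(b ^ Suc e1 - 1) * (b ^ Suc e2 - 1) \<le> b ^ Suc e1 * (b ^ Suc e2 - 1)" by simp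
  also have "\<dots> < b ^ Suc e1 * b ^ Suc e2" using p1 assms(2) by simp
  also have "\<dots> = b ^ Suc (e1 + e2 + 1)" by (simp add: power_add)
  finally show ?thesis using inE_I[OF assms(1) yy lo] by blast
qed

lemma exp_exists:
  fixes b x :: nat
  assumes "b \<ge> 2" "x \<ge> 1"
  shows "\<exists>e. b ^ e \<le> x \<and> x < b ^ Suc e"
proof -
  have "x < 2 ^ x" by (rule less_exp)
  also have "(2::nat) ^ x \<le> b ^ x" using assms by (intro power_mono) auto
  finally have ex: "\<exists>n. x < b ^ n" by blast
  define n where "n = (LEAST n. x < b ^ n)"
  have n1: "x < b ^ n" unfolding n_def by (rule LeastI_ex[OF ex])
  have "n \<noteq> 0" using n1 assms by (cases "n = 0") auto
  then obtain e where e: "n = Suc e" by (cases n) auto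
  have "\<not> x < b ^ e" using not_less_Least[of e "\<lambda>n. x < b ^ n"] e n_def by auto
  thus ?thesis using n1 e by (intro exI[of _ e]) (auto simp: not_less)
qed

lemma pow2_in_class:
  fixes b e :: nat
  assumes "b \<ge> 2"
  shows "\<exists>k. b ^ e \<le> 2 ^ k \<and> (2::nat) ^ k < b ^ Suc e"
proof -
  have ex: "\<exists>k. b ^ e \<le> (2::nat) ^ k" by (metis less_exp less_imp_le)
  define k where "k = (LEAST k. b ^ e \<le> (2::nat) ^ k)"
  have k1: "b ^ e \<le> (2::nat) ^ k" unfolding k_def by (rule LeastI_ex[OF ex])
  have "(2::nat) ^ k < b ^ Suc e"
  proof (cases k)
    case 0
    have "b ^ e \<ge> 1" using assms by simp
    hence "2 * 1 \<le> b * b ^ e" using assms by (intro mult_le_mono) auto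
    then show ?thesis using 0 by simp
  next
    case (Suc k')
    have "\<not> b ^ e \<le> (2::nat) ^ k'" using not_less_Least[of k' "\<lambda>k. b ^ e \<le> (2::nat) ^ k"] Suc k_def by auto
    hence "2 ^ k' < b ^ e" by simp
    hence "(2::nat) ^ k < 2 * b ^ e" using Suc by simp
    also have "\<dots> \<le> b * b ^ e" using assms by simp
    finally show ?thesis by simp
  qed
  thus ?thesis using k1 by blast
qed

theorem lemma2p3:
  fixes b j l :: nat and G :: "nat set"
  assumes "b \<ge> 2" and "dc_semigroup b G" and "l \<ge> 1" and "Ib b j l \<subseteq> G"
  defines "d \<equiv> nat \<lceil>real j / real l\<rceil>"
  shows "(d \<ge> 1 \<longrightarrow> Ib_inf b (d * j) \<subseteq> G)
       \<and> (d = 0 \<and> l \<ge> 2 \<and> b = 2 \<longrightarrow> G = {x. x > 0})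
       \<and> (d = 0 \<and> b > 2 \<longrightarrow> G = {x. x > 0})"
proof -
  have Gpos: "G \<subseteq> {x. x > 0}" using assms(2) unfolding dc_semigroup_def by blast
  have Gmul: "\<And>x y. x \<in> G \<Longrightarrow> y \<in> G \<Longrightarrow> x * y \<in> G" using assms(2) unfolding dc_semigroup_def by blast
  have d0: "d = 0 \<Longrightarrow> j = 0"
  proof (rule ccontr)
    assume "d = 0" "j \<noteq> 0"
    hence "real j / real l > 0" using assms(3) by simp
    hence "\<lceil>real j / real l\<rceil> \<ge> 1" by (meson ceiling_le_zero not_less zero_less_ceiling int_one_le_iff_zero_less)
    thus False using \<open>d = 0\<close> d_def by simp
  qed
  have dl: "j \<le> d * l"
  proof -
    have "real j / real l \<le> real_of_int \<lceil>real j / real l\<rceil>" by (rule le_of_int_ceiling)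
    also have "\<dots> \<le> real d" unfolding d_def by simp
    finally have "real j \<le> real d * real l" using assms(3) by (simp add: divide_le_eq)
    thus ?thesis by (metis of_nat_le_iff of_nat_mult)
  qed
  have part23: "G = {x. x > 0}" if "j = 0" "l \<ge> 2 \<or> b > 2"
  proof
    show "G \<subseteq> {x. x > 0}" by (rule Gpos)
    have "b ^ l \<ge> 3"
    proof (cases "b > 2")
      case True
      have "b ^ l \<ge> b ^ 1" using assms(3) True by (intro power_increasing) auto
      thus ?thesis using True by simp
    next
      case False
      hence "l \<ge> 2" "b = 2" using that assms(1) by auto
      hence "b ^ l \<ge> b ^ 2" by (intro power_increasing) auto
      thus ?thesis using \<open>b = 2\<close> by simp
    qed
    hence "(1::nat) \<in> Ib b j l" "(2::nat) \<in> Ib b j l" using that(1) unfolding Ib_def by simp_all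
    hence one: "1 \<in> G" and two: "2 \<in> G" using assms(4) by blast+
    have pw: "(2::nat) ^ k \<in> G" for k
    proof (induction k)
      case 0 then show ?case using one by simp
    next
      case (Suc k) then show ?case using two Gmul[of 2 "2 ^ k"] by simp
    qed
    show "{x. x > 0} \<subseteq> G"
    proof
      fix x :: nat assume "x \<in> {x. x > 0}"
      hence "x \<ge> 1" by simp
      then obtain e where e: "b ^ e \<le> x" "x < b ^ Suc e" using exp_exists[OF assms(1)] by blast
      obtain k where k: "b ^ e \<le> 2 ^ k" "(2::nat) ^ k < b ^ Suc e" using pow2_in_class[OF assms(1)] by blast
      have "inE b G e" using inE_I[OF assms(2) pw k] .
      thus "x \<in> G" using e unfolding inE_def by auto
    qed
  qed
  have part1: "Ib_inf b (d * j) \<subseteq> G" if "d \<ge> 1"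
  proof -
    have j1': "j \<ge> 1"
    proof (rule ccontr)
      assume "\<not> j \<ge> 1" hence "j = 0" by simp
      hence "d = 0" unfolding d_def by simp
      thus False using that by simp
    qed
    have baseE: "inE b G e" if "j \<le> e" "e < j + l" for e
    proof -
      have "b ^ e \<in> Ib b j l" unfolding Ib_def using that assms(1)
        by (auto intro: power_increasing power_strict_increasing)
      hence "b ^ e \<in> G" using assms(4) by blast
      moreover have "b ^ e < b ^ Suc e" using assms(1) by simp
      ultimately show ?thesis using inE_I[OF assms(2)] by blast
    qed
    have main: "\<forall>e. m * j \<le> e \<and> e < m * (j + l) \<longrightarrow> inE b G e" if "m \<ge> 1" for m
      using that
    proof (induction m rule: dec_induct)
      case base
      then show ?case using baseE by simp
    next
      case (step m)
      show ?case
      proof (intro allI impI)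
        fix e assume e: "Suc m * j \<le> e \<and> e < Suc m * (j + l)"
        show "inE b G e"
        proof (cases "e - j < m * (j + l)")
          case True
          have "inE b G (e - j)" using step.IH True e by auto
          moreover have "inE b G j" using baseE[of j] assms(3) by simp
          ultimately have "inE b G (e - j + j)" using inE_add[OF assms(2,1)] by blast
          thus ?thesis using e by simp
        next
          case False
          define e1 where "e1 = m * (j + l) - 1"
          define e2 where "e2 = e - m * (j + l)"
          have mjl: "m * (j + l) \<ge> 2" using step.hyps j1' assms(3)
            by (metis add_mono mult_le_mono one_add_one mult_1 distrib_left le_trans)
          have ml: "m * l \<ge> 1" using step.hyps assms(3) by simp
          have "m * j \<le> e1 \<and> e1 < m * (j + l)" proof -
            have "m * (j + l) = m * j + m * l" by (simp add: algebra_simps)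
            thus ?thesis using ml unfolding e1_def by linarith
          qed
          hence E1: "inE b G e1" using step.IH by blast
          have E2: "inE b G e2" using baseE False e unfolding e2_def by (auto simp: algebra_simps)
          have "e2 \<ge> 1" using False j1' mjl unfolding e2_def by linarith
          moreover have "e1 \<ge> 1" using mjl unfolding e1_def by simp
          ultimately have "inE b G (e1 + e2 + 1)" using inE_add1[OF assms(2,1) E1 E2] by blast
          moreover have "e1 + e2 + 1 = e" using mjl False j1' unfolding e1_def e2_def by linarith
          ultimately show ?thesis by simp
        qed
      qed
    qed
    show ?thesis
    proof
      fix x assume "x \<in> Ib_inf b (d * j)"
      hence x: "b ^ (d * j) \<le> x" unfolding Ib_inf_def by simp
      hence "x \<ge> 1" using assms(1) by (meson le_trans one_le_power order.trans one_le_numeral Suc_leD)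
      then obtain e where e: "b ^ e \<le> x" "x < b ^ Suc e" using exp_exists[OF assms(1)] by auto
      have "d * j \<le> e"
      proof (rule ccontr)
        assume "\<not> d * j \<le> e"
        hence "b ^ Suc e \<le> b ^ (d * j)" using assms(1) by (intro power_increasing) auto
        thus False using x e by simp
      qed
      define m where "m = e div j"
      have "d \<le> m" unfolding m_def using \<open>d * j \<le> e\<close> j1'
        by (metis div_le_mono nonzero_mult_div_cancel_right not_one_le_zero)
      hence m1: "m \<ge> 1" using that by simp
      have dm: "m * j + e mod j = e" unfolding m_def by (rule div_mult_mod_eq)
      have "e mod j < j" using j1' by simp
      have "m * j \<le> e" using dm by linarith
      moreover have "e < m * j + j" using dm \<open>e mod j < j\<close> by linarith
      moreover have "j \<le> m * l" using dl \<open>d \<le> m\<close> by (meson le_trans mult_le_mono1)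
      ultimately have "inE b G e" using main[OF m1] by (simp add: algebra_simps)
      thus "x \<in> G" using e unfolding inE_def by auto
    qed
  qed
  show ?thesis using part1 part23 d0 by auto
qed

end
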